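(* Let $\delta\in(0,1)$, $t\ge0$ and $\boldsymbol{x}\in\mathcal{X}$. Then, with probability at least $1-\delta$ (with respect to $f_t$ distributed as the Gaussian process posterior), $$|p_{t,\boldsymbol{x}}-\mu_t^{(p)}(\boldsymbol{x})|<\delta^{-1/2}\gamma_t(\boldsymbol{x}).$$
   Context: $\mathcal{D}\subset\mathbb{R}^d$ is compact, $\mathcal{X}\subset\mathcal{D}$ finite, $h\in\mathbb{R}$ a threshold, and for each $\boldsymbol{x}\in\mathcal{X}$, $g(\cdot\mid\boldsymbol{\theta}_{\boldsymbol{x}})$ is a probability density on $\mathcal{D}$. An unknown $f:\mathcal{D}\to\mathbb{R}$ has Gaussian process prior $\mathcal{GP}(0,k)$ and, after observing data $\{(\boldsymbol{s}_j,y_j)\}_{j=1}^t$ with $y_j=f(\boldsymbol{s}_j)+$ independent $\mathcal{N}(0,\sigma^2)$ noise, $f_t$ denotes a random function distributed according to the GP posterior, with posterior mean $\mu_t$ and variance $\sigma_t^2$. Define $p_{t,\boldsymbol{x}}=\int_{\mathcal{D}}\mathbf{1}[f_t(\boldsymbol{s})<h]\,g(\boldsymbol{s}\mid\boldsymbol{\theta}_{\boldsymbol{x}})\,d\boldsymbol{s}$, $\Phi_{\boldsymbol{s}}=\Phi((h-\mu_t(\boldsymbol{s}))/\sigma_t(\boldsymbol{s}))$ with $\Phi$ the standard normal cdf, $\mu_t^{(p)}(\boldsymbol{x})=\mathbb{E}[p_{t,\boldsymbol{x}}]=\int_{\mathcal{D}}\Phi_{\boldsymbol{s}}\,g(\boldsymbol{s}\mid\boldsymbol{\theta}_{\boldsymbol{x}})d\boldsymbol{s}$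 and $\gamma_t^2(\boldsymbol{x})=\int_{\mathcal{D}}\mathrm{Var}[\mathbf{1}[f_t(\boldsymbol{s})<h]]\,g(\boldsymbol{s}\mid\boldsymbol{\theta}_{\boldsymbol{x}})d\boldsymbol{s}=\int_{\mathcal{D}}\Phi_{\boldsymbol{s}}(1-\Phi_{\boldsymbol{s}})\,g(\boldsymbol{s}\mid\boldsymbol{\theta}_{\boldsymbol{x}})d\boldsymbol{s}$. *)

theory Defs
  imports "HOL-Probability.Probability"
begin

definition Phi :: "real \<Rightarrow> real" where
  "Phi z = measure (density lborel (\<lambda>x. ennreal (std_normal_density x))) {..z}"

definition psd_kernel :: "'a set \<Rightarrow> ('a \<Rightarrow> 'a \<Rightarrow> real) \<Rightarrow> bool" where
  "psd_kernel D k \<longleftrightarrow> (\<forall>s\<in>D. \<forall>s'\<in>D. k s s' = k s' s) \<and>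
     (\<forall>ss cs. set ss \<subseteq> D \<longrightarrow> length cs = length ss \<longrightarrow>
        0 \<le> (\<Sum>i<length ss. \<Sum>j<length ss. cs!i * cs!j * k (ss!i) (ss!j)))"

text \<open>The vector a = (K + noise * I)^{-1} v, with K the Gram matrix of the data points ss.\<close>
definition gp_solve :: "('a \<Rightarrow> 'a \<Rightarrow> real) \<Rightarrow> real \<Rightarrow> 'a list \<Rightarrow> (nat \<Rightarrow> real) \<Rightarrow> nat \<Rightarrow> real" where
  "gp_solve k noise ss v = (THE a. (\<forall>j\<ge>length ss. a j = 0) \<and>
     (\<forall>i<length ss. (\<Sum>j<length ss. (k (ss!i) (ss!j) + (if i = j then noise else 0)) * a j) = v i))"

definition post_mean :: "('a \<Rightarrow> 'a \<Rightarrow> real) \<Rightarrow> real \<Rightarrow> 'a list \<Rightarrow> real list \<Rightarrow> 'a \<Rightarrow> real" where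
  "post_mean k noise ss ys s = (\<Sum>i<length ss. k s (ss!i) * gp_solve k noise ss (\<lambda>i. ys!i) i)"

definition post_cov :: "('a \<Rightarrow> 'a \<Rightarrow> real) \<Rightarrow> real \<Rightarrow> 'a list \<Rightarrow> 'a \<Rightarrow> 'a \<Rightarrow> real" where
  "post_cov k noise ss s s' = k s s' - (\<Sum>i<length ss. k s (ss!i) * gp_solve k noise ss (\<lambda>i. k (ss!i) s') i)"

definition gaussian_rv :: "'w measure \<Rightarrow> ('w \<Rightarrow> real) \<Rightarrow> real \<Rightarrow> real \<Rightarrow> bool" where
  "gaussian_rv M X m v \<longleftrightarrow> X \<in> borel_measurable M \<and>
     (if v = 0 then (AE \<omega> in M. X \<omega> = m)
      else 0 < v \<and> distributed M lborel X (\<lambda>x. ennreal (normal_density m (sqrt v) x)))"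

definition gaussian_process :: "'w measure \<Rightarrow> 'a set \<Rightarrow> ('w \<Rightarrow> 'a \<Rightarrow> real) \<Rightarrow> ('a \<Rightarrow> real) \<Rightarrow> ('a \<Rightarrow> 'a \<Rightarrow> real) \<Rightarrow> bool" where
  "gaussian_process M D F m C \<longleftrightarrow> prob_space M \<and>
     (\<forall>ss cs. set ss \<subseteq> D \<longrightarrow> length cs = length ss \<longrightarrow>
        gaussian_rv M (\<lambda>\<omega>. \<Sum>i<length ss. cs!i * F \<omega> (ss!i))
          (\<Sum>i<length ss. cs!i * m (ss!i))
          (\<Sum>i<length ss. \<Sum>j<length ss. cs!i * cs!j * C (ss!i) (ss!j)))"

end

theory Submission
  imports Defs
begin

lemma std_pos_measure:
  assumes A: "A \<in> sets borel" and ab: "{a..b} \<subseteq> A" and "a < (b::real)"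
  shows "0 < measure (density lborel (\<lambda>x. ennreal (std_normal_density x))) A"
proof -
  let ?N = "density lborel (\<lambda>x. ennreal (std_normal_density x))"
  interpret N: prob_space ?N by (rule prob_space_normal_density) simp
  have "emeasure ?N A \<noteq> 0"
  proof
    assume "emeasure ?N A = 0"
    hence "(\<integral>\<^sup>+x. ennreal (std_normal_density x) * indicator A x \<partial>lborel) = 0"
      using A by (simp add: emeasure_density)
    hence "AE x in lborel. ennreal (std_normal_density x) * indicator A x = 0"
      using A by (subst (asm) nn_integral_0_iff_AE) auto
    hence "AE x in lborel. x \<notin> A"
      by (rule AE_mp) (auto intro!: AE_I2 simp: indicator_def
          normal_density_pos[of 1 0, simplified, THEN less_imp_neq, THEN not_sym])
    hence "{x\<in>space lborel. \<not> x \<notin> A} \<in> null_sets lborel"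
      by (subst (asm) AE_iff_null) (use A in auto)
    hence "A \<in> null_sets lborel" by simp
    hence "{a..b} \<in> null_sets lborel" using ab null_sets_subset[of A lborel "{a..b}"] by auto
    thus False using \<open>a<b\<close> by (simp add: null_sets_def)
  qed
  hence "measure ?N A \<noteq> 0" by (simp add: N.emeasure_eq_measure)
  thus ?thesis using measure_nonneg[of ?N A] by linarith
qed

lemma Phi_pos: "0 < Phi z" "Phi z < 1"
proof -
  let ?N = "density lborel (\<lambda>x. ennreal (std_normal_density x))"
  interpret N: prob_space ?N by (rule prob_space_normal_density) simp
  show "0 < Phi z" unfolding Phi_def by (rule std_pos_measure[of _ "z-1" z]) auto
  have "0 < measure ?N {z<..}" by (rule std_pos_measure[of _ "z+1" "z+2"]) auto
  moreover have "measure ?N {..z} = 1 - measure ?N {z<..}"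
  proof -
    have "{..z} = space ?N - {z<..}" by auto
    thus ?thesis using N.prob_compl[of "{z<..}"] by simp
  qed
  ultimately show "Phi z < 1" unfolding Phi_def by simp
qed

lemma gauss_prob:
  assumes "prob_space M" and X: "distributed M lborel X (\<lambda>x. ennreal (normal_density m s x))" and "0 < s"
  shows "measure M {\<omega>\<in>space M. X \<omega> < h} = Phi ((h-m)/s)"
proof -
  interpret prob_space M by fact
  let ?N = "density lborel (\<lambda>x. ennreal (std_normal_density x))"
  interpret N: prob_space ?N by (rule prob_space_normal_density) simp
  let ?Z = "\<lambda>x. (X x - m) / s"
  have Z: "distributed M lborel ?Z (\<lambda>x. ennreal (std_normal_density x))"
    using normal_standard_normal_convert[OF \<open>0<s\<close>] X by simp
  have "{\<omega>\<in>space M. X \<omega> < h} = ?Z -` {..<(h-m)/s} \<inter> space M"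
    using \<open>0<s\<close> by (auto simp: divide_simps)
  hence "measure M {\<omega>\<in>space M. X \<omega> < h} = measure (distr M lborel ?Z) {..<(h-m)/s}"
    using measure_distr[OF distributed_measurable[OF Z], of "{..<(h-m)/s}"] by simp
  also have "\<dots> = measure ?N {..<(h-m)/s}"
    using Z by (simp add: distributed_distr_eq_density)
  also have "\<dots> = measure ?N {..(h-m)/s}"
  proof -
    have "emeasure ?N {(h-m)/s} = 0"
      by (simp add: emeasure_density)
    hence "measure ?N {(h-m)/s} = 0" by (simp add: measure_def)
    moreover have "{..(h-m)/s} = {..<(h-m)/s} \<union> {(h-m)/s}" by auto
    moreover have "measure ?N ({..<(h-m)/s} \<union> {(h-m)/s}) = measure ?N {..<(h-m)/s} + measure ?N {(h-m)/s}"
      by (rule N.finite_measure_Union) auto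
    ultimately show ?thesis by simp
  qed
  finally show ?thesis unfolding Phi_def .
qed
lemma int_bdd:
  fixes G a :: "'a \<Rightarrow> real"
  assumes G: "integrable N G" and a: "a \<in> borel_measurable N" and b: "\<And>s. \<bar>a s\<bar> \<le> c"
  shows "integrable N (\<lambda>s. a s * G s)"
proof -
  have i: "integrable N (\<lambda>s. c * G s)" using G by simp
  have m: "(\<lambda>s. a s * G s) \<in> borel_measurable N" using a borel_measurable_integrable[OF G] by measurable
  have ae: "AE s in N. norm (a s * G s) \<le> norm (c * G s)"
  proof (rule AE_I2)
    fix s
    have "\<bar>a s\<bar> * \<bar>G s\<bar> \<le> c * \<bar>G s\<bar>" using b[of s] by (simp add: mult_right_mono)
    also have "\<dots> \<le> \<bar>c * G s\<bar>" by (simp add: abs_mult mult_right_mono)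
    finally show "norm (a s * G s) \<le> norm (c * G s)" by (simp add: abs_mult)
  qed
  show ?thesis by (rule Bochner_Integration.integrable_bound[OF i m ae])
qed

lemma sq_integral_le:
  fixes G a :: "'a \<Rightarrow> real"
  assumes G: "integrable N G" and Gn: "\<And>s. 0 \<le> G s" and G1: "integral\<^sup>L N G = 1"
    and a: "a \<in> borel_measurable N" and b: "\<And>s. \<bar>a s\<bar> \<le> 1"
  shows "(\<integral>s. a s * G s \<partial>N)\<^sup>2 \<le> (\<integral>s. (a s)\<^sup>2 * G s \<partial>N)"
proof -
  define m where "m = (\<integral>s. a s * G s \<partial>N)"
  have i1: "integrable N (\<lambda>s. a s * G s)" by (rule int_bdd[OF G a b])
  have i2: "integrable N (\<lambda>s. (a s)\<^sup>2 * G s)"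
  proof (rule int_bdd[OF G _, of _ 1])
    show "(\<lambda>s. (a s)\<^sup>2) \<in> borel_measurable N" using a by measurable
    fix s show "\<bar>(a s)\<^sup>2\<bar> \<le> 1" using b[of s] by (simp add: abs_square_le_1)
  qed
  have "0 \<le> (\<integral>s. (a s - m)\<^sup>2 * G s \<partial>N)"
    by (rule integral_nonneg_AE) (auto intro!: AE_I2 simp: Gn)
  also have "(\<integral>s. (a s - m)\<^sup>2 * G s \<partial>N) = (\<integral>s. (a s)\<^sup>2 * G s - 2 * m * (a s * G s) + m\<^sup>2 * G s \<partial>N)"
    by (rule Bochner_Integration.integral_cong) (auto simp: power2_eq_square algebra_simps)
  also have "\<dots> = (\<integral>s. (a s)\<^sup>2 * G s \<partial>N) - 2 * m * m + m\<^sup>2 * 1"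
    using i1 i2 G by (simp add: G1 m_def[symmetric])
  finally show ?thesis by (simp add: m_def[symmetric] power2_eq_square)
qed
theorem lemma1:
  fixes M :: "'w measure"
    and D :: "'a::euclidean_space set"
    and X :: "'a set"
    and h :: real
    and g :: "'a \<Rightarrow> 'a \<Rightarrow> real"
    and k :: "'a \<Rightarrow> 'a \<Rightarrow> real"
    and noise :: real
    and ss :: "'a list" and ys :: "real list"
    and f :: "'w \<Rightarrow> 'a \<Rightarrow> real"
    and \<delta> :: real and x :: 'a
  defines "t \<equiv> length ss"
  defines "\<mu> \<equiv> post_mean k noise ss ys"
  defines "\<sigma> \<equiv> \<lambda>s. sqrt (post_cov k noise ss s s)"
  defines "PhiS \<equiv> \<lambda>s. Phi ((h - \<mu> s) / \<sigma> s)"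
  defines "p \<equiv> \<lambda>\<omega> x. (LINT s:D|lborel. indicator {s. f \<omega> s < h} s * g x s)"
  defines "\<mu>p \<equiv> \<lambda>x. (LINT s:D|lborel. PhiS s * g x s)"
  defines "\<gamma> \<equiv> \<lambda>x. sqrt (LINT s:D|lborel. PhiS s * (1 - PhiS s) * g x s)"
  assumes "compact D"
    and "finite X" and "X \<subseteq> D"
    and "\<And>x. x \<in> X \<Longrightarrow> g x \<in> borel_measurable lborel \<and> (\<forall>s. 0 \<le> g x s)
           \<and> set_integrable lborel D (g x) \<and> (LINT s:D|lborel. g x s) = 1"
    and "psd_kernel D k"
    and "0 < noise"
    and "set ss \<subseteq> D" and "length ys = length ss"
    and "\<And>s. s \<in> D \<Longrightarrow> 0 < post_cov k noise ss s s"
    and "gaussian_process M D f \<mu> (post_cov k noise ss)"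
    and "(\<lambda>(\<omega>, s). f \<omega> s) \<in> borel_measurable (M \<Otimes>\<^sub>M lborel)"
    and "0 < \<delta>" and "\<delta> < 1"
    and "x \<in> X"
  shows "prob_space.prob M {\<omega> \<in> space M. \<bar>p \<omega> x - \<mu>p x\<bar> < \<delta> powr (-1/2) * \<gamma> x} \<ge> 1 - \<delta>"
proof -
  note mu_def = \<open>\<mu> \<equiv> post_mean k noise ss ys\<close>
  note sig_def = \<open>\<sigma> \<equiv> \<lambda>s. sqrt (post_cov k noise ss s s)\<close>
  note PhiS_def = \<open>PhiS \<equiv> \<lambda>s. Phi ((h - \<mu> s) / \<sigma> s)\<close>
  note p_def = \<open>p \<equiv> \<lambda>\<omega> x. (LINT s:D|lborel. indicator {s. f \<omega> s < h} s * g x s)\<close>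
  note mup_def = \<open>\<mu>p \<equiv> \<lambda>x. (LINT s:D|lborel. PhiS s * g x s)\<close>
  note gam_def = \<open>\<gamma> \<equiv> \<lambda>x. sqrt (LINT s:D|lborel. PhiS s * (1 - PhiS s) * g x s)\<close>
  have gp: "gaussian_process M D f \<mu> (post_cov k noise ss)" by fact
  then interpret M: prob_space M by (simp add: gaussian_process_def)
  interpret P: pair_sigma_finite M lborel
    by (simp add: pair_sigma_finite_def M.sigma_finite_measure_axioms lborel.sigma_finite_measure_axioms)
  have Fm[measurable]: "(\<lambda>(\<omega>, s). f \<omega> s) \<in> borel_measurable (M \<Otimes>\<^sub>M lborel)" by fact
  have Dm[measurable]: "D \<in> sets lborel" using \<open>compact D\<close> by (simp add: compact_imp_closed borel_closed)
  have gx: "g x \<in> borel_measurable lborel" "\<And>s. 0 \<le> g x s" "set_integrable lborel D (g x)"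
      "(LINT s:D|lborel. g x s) = 1"
    using \<open>\<And>x. x \<in> X \<Longrightarrow> g x \<in> borel_measurable lborel \<and> (\<forall>s. 0 \<le> g x s)
           \<and> set_integrable lborel D (g x) \<and> (LINT s:D|lborel. g x s) = 1\<close>[OF \<open>x \<in> X\<close>] by auto
  define G where "G s = indicator D s * g x s" for s
  have Gm[measurable]: "G \<in> borel_measurable lborel" unfolding G_def[abs_def] using gx(1) by measurable
  have Gi: "integrable lborel G" using gx(3) unfolding set_integrable_def G_def[abs_def] by simp
  have Gn: "0 \<le> G s" for s unfolding G_def using gx(2) by (simp add: indicator_def)
  have G1: "integral\<^sup>L lborel G = 1" using gx(4) unfolding set_lebesgue_integral_def G_def[abs_def] by simp
  define I where "I \<omega> s = (if f \<omega> s < h then 1 else 0 :: real)" for \<omega> s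
  have Im[measurable]: "(\<lambda>(\<omega>, s). I \<omega> s) \<in> borel_measurable (M \<Otimes>\<^sub>M lborel)"
    unfolding I_def by measurable
  have fw: "(\<lambda>s. f \<omega> s) \<in> borel_measurable lborel" if "\<omega> \<in> space M" for \<omega>
    using measurable_compose_Pair1[OF that Fm] by simp
  have Iw: "(\<lambda>s. I \<omega> s) \<in> borel_measurable lborel" if "\<omega> \<in> space M" for \<omega>
    unfolding I_def using fw[OF that] by measurable
  have I01: "I \<omega> s = 0 \<or> I \<omega> s = 1" for \<omega> s by (simp add: I_def)
  define q where "q s = measure M {\<omega>\<in>space M. f \<omega> s < h}" for s
  have q01: "0 \<le> q s" "q s \<le> 1" for s by (simp_all add: q_def M.prob_le_1)
  have qI: "q s = (\<integral>\<omega>. I \<omega> s \<partial>M)" for s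
  proof -
    have "(\<integral>\<omega>. I \<omega> s \<partial>M) = (\<integral>\<omega>. indicator {\<omega>. f \<omega> s < h} \<omega> \<partial>M)"
      by (simp add: I_def indicator_def of_bool_def)
    also have "\<dots> = measure M ({\<omega>. f \<omega> s < h} \<inter> space M)" by simp
    also have "\<dots> = q s" unfolding q_def by (rule arg_cong[where f="measure M"]) auto
    finally show ?thesis ..
  qed
  have qm[measurable]: "q \<in> borel_measurable lborel"
  proof -
    have "(\<lambda>s. \<integral>\<omega>. I \<omega> s \<partial>M) \<in> borel_measurable lborel"
      by (rule M.borel_measurable_lebesgue_integral) measurable
    then show ?thesis by (simp add: qI[abs_def])
  qed
  have PhiSq: "PhiS s = q s" if "s \<in> D" for s
  proof -
    have v: "0 < post_cov k noise ss s s"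
      using \<open>\<And>s. s \<in> D \<Longrightarrow> 0 < post_cov k noise ss s s\<close> that by blast
    from gp have H: "\<And>ss' cs. set ss' \<subseteq> D \<Longrightarrow> length cs = length ss' \<Longrightarrow>
        gaussian_rv M (\<lambda>\<omega>. \<Sum>i<length ss'. cs!i * f \<omega> (ss'!i)) (\<Sum>i<length ss'. cs!i * \<mu> (ss'!i))
          (\<Sum>i<length ss'. \<Sum>j<length ss'. cs!i * cs!j * post_cov k noise ss (ss'!i) (ss'!j))"
      unfolding gaussian_process_def by blast
    have "gaussian_rv M (\<lambda>\<omega>. f \<omega> s) (\<mu> s) (post_cov k noise ss s s)"
      using H[of "[s]" "[1]"] that by simp
    hence dist: "distributed M lborel (\<lambda>\<omega>. f \<omega> s)
        (\<lambda>y. ennreal (normal_density (\<mu> s) (sqrt (post_cov k noise ss s s)) y))"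
      using v unfolding gaussian_rv_def by auto
    have "q s = Phi ((h - \<mu> s) / sqrt (post_cov k noise ss s s))"
      unfolding q_def by (rule gauss_prob[OF M.prob_space_axioms dist]) (use v in simp)
    thus ?thesis unfolding PhiS_def sig_def by simp
  qed
  have p_eq: "p \<omega> x = (\<integral>s. I \<omega> s * G s \<partial>lborel)" for \<omega>
    unfolding p_def set_lebesgue_integral_def G_def I_def
    by (intro Bochner_Integration.integral_cong) (auto simp: indicator_def)
  have mup_eq: "\<mu>p x = (\<integral>s. q s * G s \<partial>lborel)"
    unfolding mup_def set_lebesgue_integral_def G_def
    by (intro Bochner_Integration.integral_cong) (auto simp: indicator_def PhiSq)
  have Iqb: "\<bar>I \<omega> s - q s\<bar> \<le> 1" for \<omega> s using q01[of s] I01[of \<omega> s] by auto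
  define Y where "Y \<omega> = p \<omega> x - \<mu>p x" for \<omega>
  have Y_eq: "Y \<omega> = (\<integral>s. (I \<omega> s - q s) * G s \<partial>lborel)" if "\<omega> \<in> space M" for \<omega>
  proof -
    have i1: "integrable lborel (\<lambda>s. I \<omega> s * G s)"
      by (rule int_bdd[OF Gi Iw[OF that], of 1]) (simp add: I_def)
    have i2: "integrable lborel (\<lambda>s. q s * G s)"
      by (rule int_bdd[OF Gi qm, of 1]) (use q01 in auto)
    have "(\<integral>s. (I \<omega> s - q s) * G s \<partial>lborel) = (\<integral>s. I \<omega> s * G s - q s * G s \<partial>lborel)"
      by (simp add: left_diff_distrib)
    also have "\<dots> = (\<integral>s. I \<omega> s * G s \<partial>lborel) - (\<integral>s. q s * G s \<partial>lborel)"
      using i1 i2 by (rule Bochner_Integration.integral_diff)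
    finally show ?thesis unfolding Y_def p_eq mup_eq by simp
  qed
  have Iqm: "(\<lambda>s. I \<omega> s - q s) \<in> borel_measurable lborel" if "\<omega> \<in> space M" for \<omega>
    using Iw[OF that] by measurable
  have sqi: "integrable lborel (\<lambda>s. (I \<omega> s - q s)\<^sup>2 * G s)" if "\<omega> \<in> space M" for \<omega>
  proof (rule int_bdd[OF Gi _, of _ 1])
    show "(\<lambda>s. (I \<omega> s - q s)\<^sup>2) \<in> borel_measurable lborel" using Iqm[OF that] by measurable
    fix s show "\<bar>(I \<omega> s - q s)\<^sup>2\<bar> \<le> 1" using Iqb[of \<omega> s] by (simp add: abs_square_le_1)
  qed
  have jensen: "(Y \<omega>)\<^sup>2 \<le> (\<integral>s. (I \<omega> s - q s)\<^sup>2 * G s \<partial>lborel)" if "\<omega> \<in> space M" for \<omega>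
    unfolding Y_eq[OF that] by (rule sq_integral_le[OF Gi Gn G1 Iqm[OF that] Iqb])
  have Ybd: "(Y \<omega>)\<^sup>2 \<le> 1" if "\<omega> \<in> space M" for \<omega>
  proof -
    have "(\<integral>s. (I \<omega> s - q s)\<^sup>2 * G s \<partial>lborel) \<le> (\<integral>s. G s \<partial>lborel)"
    proof (rule integral_mono[OF sqi[OF that] Gi])
      fix s
      have "(I \<omega> s - q s)\<^sup>2 \<le> 1" using Iqb[of \<omega> s] by (simp add: abs_square_le_1)
      thus "(I \<omega> s - q s)\<^sup>2 * G s \<le> G s" using Gn[of s] by (simp add: mult_left_le_one_le)
    qed
    thus ?thesis using jensen[OF that] G1 by simp
  qed
  have Ym[measurable]: "Y \<in> borel_measurable M"
  proof -
    have "(\<lambda>\<omega>. \<integral>s. I \<omega> s * G s \<partial>lborel) \<in> borel_measurable M"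
      by (rule lborel.borel_measurable_lebesgue_integral) measurable
    thus ?thesis unfolding Y_def[abs_def] p_eq by measurable
  qed
  have Y2i: "integrable M (\<lambda>\<omega>. (Y \<omega>)\<^sup>2)"
  proof (rule M.integrable_const_bound[where B=1])
    show "AE \<omega> in M. norm ((Y \<omega>)\<^sup>2) \<le> 1" by (rule AE_I2) (use Ybd in simp)
    show "(\<lambda>\<omega>. (Y \<omega>)\<^sup>2) \<in> borel_measurable M" by measurable
  qed
  define V where "V = (\<integral>s. (q s - (q s)\<^sup>2) * G s \<partial>lborel)"
  have Vi: "integrable lborel (\<lambda>s. (q s - (q s)\<^sup>2) * G s)"
  proof (rule int_bdd[OF Gi _, of _ 1])
    show "(\<lambda>s. q s - (q s)\<^sup>2) \<in> borel_measurable lborel" by measurable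
    fix s
    have h1: "q s * q s \<le> q s" using q01[of s] by (simp add: mult_left_le_one_le)
    have h2: "0 \<le> q s * q s" by simp
    show "\<bar>q s - (q s)\<^sup>2\<bar> \<le> 1" unfolding power2_eq_square abs_le_iff using q01[of s] h1 h2 by linarith
  qed
  have Vn: "0 \<le> (q s - (q s)\<^sup>2) * G s" for s
    using q01[of s] Gn[of s] by (simp add: power2_eq_square mult_left_le_one_le)
  have gamV: "\<gamma> x = sqrt V"
    unfolding gam_def V_def set_lebesgue_integral_def G_def
    by (simp, intro arg_cong[where f=sqrt] Bochner_Integration.integral_cong)
       (auto simp: indicator_def PhiSq power2_eq_square algebra_simps)
  have Vpos: "0 < V"
  proof -
    have "V \<ge> 0" unfolding V_def by (rule integral_nonneg_AE) (use Vn in auto)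
    moreover have "V \<noteq> 0"
    proof
      assume "V = 0"
      hence "AE s in lborel. (q s - (q s)\<^sup>2) * G s = 0"
        unfolding V_def using integral_nonneg_eq_0_iff_AE[OF Vi] Vn by auto
      hence "AE s in lborel. G s = 0"
      proof (rule AE_mp, intro AE_I2 impI)
        fix s assume "(q s - (q s)\<^sup>2) * G s = 0"
        show "G s = 0"
        proof (cases "s \<in> D")
          case True
          have "0 < q s" "q s < 1" using Phi_pos PhiSq[OF True] unfolding PhiS_def by metis+
          hence "0 < q s - (q s)\<^sup>2" by (simp add: power2_eq_square)
          thus ?thesis using \<open>(q s - (q s)\<^sup>2) * G s = 0\<close> by simp
        next
          case False thus ?thesis by (simp add: G_def)
        qed
      qed
      hence "integral\<^sup>L lborel G = 0" by (rule integral_eq_zero_AE)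
      thus False using G1 by simp
    qed
    ultimately show ?thesis by simp
  qed
  have inner: "(\<integral>\<^sup>+\<omega>. ennreal ((I \<omega> s - q s)\<^sup>2 * G s) \<partial>M) = ennreal ((q s - (q s)\<^sup>2) * G s)" for s
  proof -
    have Ism: "(\<lambda>\<omega>. I \<omega> s) \<in> borel_measurable M" by measurable
    have Isi: "integrable M (\<lambda>\<omega>. I \<omega> s)"
    proof (rule M.integrable_const_bound[where B=1])
      show "AE \<omega> in M. norm (I \<omega> s) \<le> 1" by (rule AE_I2) (simp add: I_def)
    qed (rule Ism)
    have "(\<integral>\<omega>. (I \<omega> s - q s)\<^sup>2 \<partial>M) = (\<integral>\<omega>. I \<omega> s * (1 - 2 * q s) + (q s)\<^sup>2 \<partial>M)"
      by (rule Bochner_Integration.integral_cong) (auto simp: I_def power2_eq_square algebra_simps)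
    also have "\<dots> = (\<integral>\<omega>. I \<omega> s \<partial>M) * (1 - 2 * q s) + (q s)\<^sup>2"
      using Isi by (simp add: M.prob_space)
    also have "\<dots> = q s - (q s)\<^sup>2" by (simp add: qI[symmetric] power2_eq_square algebra_simps)
    finally have E: "(\<integral>\<omega>. (I \<omega> s - q s)\<^sup>2 \<partial>M) = q s - (q s)\<^sup>2" .
    have Ism2: "(\<lambda>\<omega>. (I \<omega> s - q s)\<^sup>2) \<in> borel_measurable M" by measurable
    have ae1: "AE \<omega> in M. norm ((I \<omega> s - q s)\<^sup>2) \<le> 1"
    proof (rule AE_I2)
      fix \<omega> show "norm ((I \<omega> s - q s)\<^sup>2) \<le> 1" using Iqb[of \<omega> s] by (simp add: abs_square_le_1)
    qed
    have i0: "integrable M (\<lambda>\<omega>. (I \<omega> s - q s)\<^sup>2)"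
      by (rule M.integrable_const_bound[OF ae1 Ism2])
    have i: "integrable M (\<lambda>\<omega>. (I \<omega> s - q s)\<^sup>2 * G s)"
      by (rule integrable_mult_left) (rule i0)
    have "(\<integral>\<^sup>+\<omega>. ennreal ((I \<omega> s - q s)\<^sup>2 * G s) \<partial>M) = ennreal (\<integral>\<omega>. (I \<omega> s - q s)\<^sup>2 * G s \<partial>M)"
      by (rule nn_integral_eq_integral[OF i]) (use Gn in auto)
    also have "\<dots> = ennreal ((q s - (q s)\<^sup>2) * G s)" by (simp add: E)
    finally show ?thesis .
  qed
  have "ennreal (\<integral>\<omega>. (Y \<omega>)\<^sup>2 \<partial>M) = (\<integral>\<^sup>+\<omega>. ennreal ((Y \<omega>)\<^sup>2) \<partial>M)"
    by (rule nn_integral_eq_integral[OF Y2i, symmetric]) auto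
  also have "\<dots> \<le> (\<integral>\<^sup>+\<omega>. \<integral>\<^sup>+s. ennreal ((I \<omega> s - q s)\<^sup>2 * G s) \<partial>lborel \<partial>M)"
  proof (rule nn_integral_mono)
    fix \<omega> assume w: "\<omega> \<in> space M"
    have "ennreal ((Y \<omega>)\<^sup>2) \<le> ennreal (\<integral>s. (I \<omega> s - q s)\<^sup>2 * G s \<partial>lborel)"
      using jensen[OF w] by (simp add: ennreal_leI)
    also have "\<dots> = (\<integral>\<^sup>+s. ennreal ((I \<omega> s - q s)\<^sup>2 * G s) \<partial>lborel)"
      by (rule nn_integral_eq_integral[OF sqi[OF w], symmetric]) (use Gn in auto)
    finally show "ennreal ((Y \<omega>)\<^sup>2) \<le> (\<integral>\<^sup>+s. ennreal ((I \<omega> s - q s)\<^sup>2 * G s) \<partial>lborel)" .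
  qed
  also have "\<dots> = (\<integral>\<^sup>+s. \<integral>\<^sup>+\<omega>. ennreal ((I \<omega> s - q s)\<^sup>2 * G s) \<partial>M \<partial>lborel)"
    by (rule P.Fubini'[symmetric]) measurable
  also have "\<dots> = (\<integral>\<^sup>+s. ennreal ((q s - (q s)\<^sup>2) * G s) \<partial>lborel)"
    by (simp add: inner)
  also have "\<dots> = ennreal V"
    unfolding V_def by (rule nn_integral_eq_integral[OF Vi]) (use Vn in auto)
  finally have EY: "(\<integral>\<omega>. (Y \<omega>)\<^sup>2 \<partial>M) \<le> V"
    using Vpos by (simp add: ennreal_le_iff)
  define c where "c = V / \<delta>"
  have cpos: "0 < c" unfolding c_def using Vpos \<open>0 < \<delta>\<close> by simp
  have Bset: "{\<omega>\<in>space M. c \<le> (Y \<omega>)\<^sup>2} \<in> sets M" by measurable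
  have "measure M {\<omega>\<in>space M. (Y \<omega>)\<^sup>2 \<ge> c} \<le> (\<integral>\<omega>. (Y \<omega>)\<^sup>2 \<partial>M) / c"
    by (rule integral_Markov_inequality_measure[OF Y2i Bset _ cpos]) auto
  also have "\<dots> \<le> V / c" using EY cpos by (simp add: divide_right_mono)
  also have "\<dots> = \<delta>" unfolding c_def using Vpos \<open>0 < \<delta>\<close> by simp
  finally have Mk: "measure M {\<omega>\<in>space M. c \<le> (Y \<omega>)\<^sup>2} \<le> \<delta>" .
  have a: "\<delta> powr (-1/2) * \<gamma> x = sqrt c"
  proof -
    have "\<delta> powr (-1/2) = inverse (\<delta> powr (1/2))" by (simp add: powr_minus[symmetric])
    also have "\<dots> = inverse (sqrt \<delta>)" using \<open>0 < \<delta>\<close> by (simp add: powr_half_sqrt)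
    finally show ?thesis unfolding gamV c_def by (simp add: real_sqrt_divide field_simps)
  qed
  have "{\<omega> \<in> space M. \<bar>p \<omega> x - \<mu>p x\<bar> < \<delta> powr (-1/2) * \<gamma> x} = space M - {\<omega>\<in>space M. c \<le> (Y \<omega>)\<^sup>2}"
  proof -
    have "\<bar>Y \<omega>\<bar> < sqrt c \<longleftrightarrow> (Y \<omega>)\<^sup>2 < c" for \<omega>
      by (metis real_sqrt_abs real_sqrt_less_iff)
    thus ?thesis unfolding a Y_def[symmetric] by (auto simp: not_le)
  qed
  hence "prob_space.prob M {\<omega> \<in> space M. \<bar>p \<omega> x - \<mu>p x\<bar> < \<delta> powr (-1/2) * \<gamma> x}
      = 1 - measure M {\<omega>\<in>space M. c \<le> (Y \<omega>)\<^sup>2}"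
    using M.prob_compl[OF Bset] by simp
  thus ?thesis using Mk by simp
qed

end
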